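(* Let $R$ be a commutative Noetherian ring of prime characteristic $p$, suppose $c$ is a $p^{w_0}$-weak test element for $R$, and let $\mathfrak{a}$ be an ideal of $R$. Let $H(\mathfrak{a})=\bigoplus_{n\ge0}R/\mathfrak{a}^{[p^n]}$ and $G(\mathfrak{a})=\bigoplus_{n\ge0}R/(\mathfrak{a}^{[p^n]})^F$ be the graded left $R[x,f]$-modules in which $x$ sends the class of $r$ in degree $n$ to the class of $r^p$ in degree $n+1$. Then (i) $\operatorname{ann}_{H(\mathfrak{a})}(\bigoplus_{n\ge w_0}Rcx^n)=\bigoplus_{n\ge0}(\mathfrak{a}^{[p^n]})^*/\mathfrak{a}^{[p^n]}$; (ii) $\operatorname{ann}_{G(\mathfrak{a})}(\bigoplus_{n\ge0}Rcx^n)=\bigoplus_{n\ge0}(\mathfrak{a}^{[p^n]})^*/(\mathfrak{a}^{[p^n]})^F$.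
   Context: $R[x,f]$ is the Frobenius skew polynomial ring: free left $R$-module on $(x^i)_{i\ge0}$, $xr=r^px$. For a subset $\mathfrak{B}$ of $R[x,f]$, $\operatorname{ann}_M\mathfrak{B}=\{m\in M:\theta m=0\ \forall\theta\in\mathfrak{B}\}$. $\mathfrak{a}^{[p^n]}$ is generated by $p^n$-th powers of elements of $\mathfrak{a}$; $\mathfrak{a}^F=\{r: r^{p^n}\in\mathfrak{a}^{[p^n]}\text{ for some }n\}$ (Frobenius closure); $R^\circ$ the complement of the union of minimal primes; $\mathfrak{a}^*$ tight closure. A $p^{w_0}$-weak test element is $c\in R^\circ$ such that for every ideal $\mathfrak{b}$ and $r\in R$: $r\in\mathfrak{b}^*$ iff $cr^{p^n}\in\mathfrak{b}^{[p^n]}$ for all $n\ge w_0$. *)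

theory Defs
  imports Main "HOL-Computational_Algebra.Primes"
begin

definition is_ideal :: "'a::comm_ring_1 set \<Rightarrow> bool" where
  "is_ideal I \<longleftrightarrow> 0 \<in> I \<and> (\<forall>x\<in>I. \<forall>y\<in>I. x + y \<in> I) \<and> (\<forall>r. \<forall>x\<in>I. r * x \<in> I)"

definition ideal_gen :: "'a::comm_ring_1 set \<Rightarrow> 'a set" where
  "ideal_gen S = \<Inter>{I. is_ideal I \<and> S \<subseteq> I}"

definition noetherian_ring :: "'a::comm_ring_1 itself \<Rightarrow> bool" where
  "noetherian_ring _ \<longleftrightarrow> (\<forall>I::'a set. is_ideal I \<longrightarrow> (\<exists>S. finite S \<and> I = ideal_gen S))"

definition prime_ideal :: "'a::comm_ring_1 set \<Rightarrow> bool" where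
  "prime_ideal P \<longleftrightarrow> is_ideal P \<and> P \<noteq> UNIV \<and> (\<forall>x y. x * y \<in> P \<longrightarrow> x \<in> P \<or> y \<in> P)"

definition minimal_prime :: "'a::comm_ring_1 set \<Rightarrow> bool" where
  "minimal_prime P \<longleftrightarrow> prime_ideal P \<and> (\<forall>Q. prime_ideal Q \<and> Q \<subseteq> P \<longrightarrow> Q = P)"

definition R_circ :: "'a::comm_ring_1 set" where
  "R_circ = {c. \<forall>P. minimal_prime P \<longrightarrow> c \<notin> P}"

definition frob_bracket :: "nat \<Rightarrow> nat \<Rightarrow> 'a::comm_ring_1 set \<Rightarrow> 'a set" where
  "frob_bracket p n a = ideal_gen ((\<lambda>r. r ^ (p ^ n)) ` a)"

definition frob_closure :: "nat \<Rightarrow> 'a::comm_ring_1 set \<Rightarrow> 'a set" where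
  "frob_closure p a = {r. \<exists>n. r ^ (p ^ n) \<in> frob_bracket p n a}"

definition tight_closure :: "nat \<Rightarrow> 'a::comm_ring_1 set \<Rightarrow> 'a set" where
  "tight_closure p a = {r. \<exists>c\<in>R_circ. \<exists>n0. \<forall>n\<ge>n0. c * r ^ (p ^ n) \<in> frob_bracket p n a}"

definition weak_test_element :: "nat \<Rightarrow> nat \<Rightarrow> 'a::comm_ring_1 \<Rightarrow> bool" where
  "weak_test_element p w0 c \<longleftrightarrow> c \<in> R_circ \<and>
     (\<forall>b r. is_ideal b \<longrightarrow>
        (r \<in> tight_closure p b \<longleftrightarrow> (\<forall>n\<ge>w0. c * r ^ (p ^ n) \<in> frob_bracket p n b)))"

text \<open>An element of R[x,f] is a finitely supported
  coefficient sequence theta (theta = sum theta_i x^i); an element of a graded module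
  of the form (direct sum over n of R/J_n) is represented by a finitely supported
  sequence h of representatives (h_n a representative of the degree-n component).\<close>
definition fin_supp :: "(nat \<Rightarrow> 'a::zero) \<Rightarrow> bool" where
  "fin_supp h \<longleftrightarrow> (\<exists>N. \<forall>n\<ge>N. h n = 0)"

text \<open>Action of R[x,f] on such graded modules: x maps the class of r in degree n to
  the class of r^p in degree n+1, so (theta . h)_k = sum_{i<=k} theta_i h_{k-i}^(p^i).\<close>
definition frob_act :: "nat \<Rightarrow> (nat \<Rightarrow> 'a::comm_ring_1) \<Rightarrow> (nat \<Rightarrow> 'a) \<Rightarrow> nat \<Rightarrow> 'a" where
  "frob_act p \<theta> h k = (\<Sum>i\<le>k. \<theta> i * (h (k - i)) ^ (p ^ i))"

text \<open>Annihilator, in the module (direct sum over n of R/J n), of a set B of elements of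
  R[x,f]; an element is zero iff each component lies in J k.\<close>
definition graded_ann :: "nat \<Rightarrow> (nat \<Rightarrow> 'a::comm_ring_1 set) \<Rightarrow> (nat \<Rightarrow> 'a) set \<Rightarrow> (nat \<Rightarrow> 'a) set" where
  "graded_ann p J B = {h. fin_supp h \<and> (\<forall>\<theta>\<in>B. \<forall>k. frob_act p \<theta> h k \<in> J k)}"

definition cx_sum :: "'a::comm_ring_1 \<Rightarrow> nat \<Rightarrow> (nat \<Rightarrow> 'a) set" where
  "cx_sum c w = {\<theta>. fin_supp \<theta> \<and> (\<forall>i. i < w \<longrightarrow> \<theta> i = 0) \<and> (\<forall>i. \<exists>r. \<theta> i = r * c)}"

end

theory Submission
  imports Defs
begin

lemma is_ideal_UNIV: "is_ideal (UNIV::'a::comm_ring_1 set)"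
  by (simp add: is_ideal_def)

lemma ideal_gen_ideal: "is_ideal (ideal_gen S)"
  unfolding is_ideal_def
proof (intro conjI ballI allI)
  show "0 \<in> ideal_gen S" unfolding ideal_gen_def is_ideal_def by simp
next
  fix x y assume "x \<in> ideal_gen S" "y \<in> ideal_gen S"
  then show "x + y \<in> ideal_gen S" unfolding ideal_gen_def is_ideal_def by simp
next
  fix r x assume "x \<in> ideal_gen S"
  then show "r * x \<in> ideal_gen S" unfolding ideal_gen_def is_ideal_def by simp
qed

lemma ideal_gen_sub: "S \<subseteq> ideal_gen S"
  unfolding ideal_gen_def by blast

lemma ideal_gen_least: "is_ideal I \<Longrightarrow> S \<subseteq> I \<Longrightarrow> ideal_gen S \<subseteq> I"
  unfolding ideal_gen_def by blast

lemma ideal_mult: "is_ideal I \<Longrightarrow> x \<in> I \<Longrightarrow> r * x \<in> I"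
  unfolding is_ideal_def by blast

lemma ideal_mult2: "is_ideal I \<Longrightarrow> x \<in> I \<Longrightarrow> x * r \<in> I"
  using ideal_mult[of I x r] by (simp add: mult.commute)

lemma ideal_zero: "is_ideal I \<Longrightarrow> 0 \<in> I"
  unfolding is_ideal_def by blast

lemma ideal_add: "is_ideal I \<Longrightarrow> x \<in> I \<Longrightarrow> y \<in> I \<Longrightarrow> x + y \<in> I"
  unfolding is_ideal_def by blast

lemma ideal_sum:
  assumes I: "is_ideal I" and f: "\<And>i. i \<in> A \<Longrightarrow> f i \<in> I"
  shows "sum f A \<in> I"
  using f
proof (induction A rule: infinite_finite_induct)
  case (infinite A) then show ?case using ideal_zero[OF I] by simp
next
  case empty then show ?case using ideal_zero[OF I] by simp
next
  case (insert x F)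
  have "f x \<in> I" using insert.prems by simp
  moreover have "sum f F \<in> I" using insert.IH insert.prems by simp
  ultimately show ?case using insert.hyps ideal_add[OF I] by simp
qed

lemma bracket_ideal: "is_ideal (frob_bracket p n a)"
  unfolding frob_bracket_def by (rule ideal_gen_ideal)

lemma pow_in_bracket: "x \<in> a \<Longrightarrow> x ^ (p ^ n) \<in> frob_bracket p n a"
  unfolding frob_bracket_def by (rule subsetD[OF ideal_gen_sub], rule imageI)

lemma bracket_comp:
  fixes a :: "'a::comm_ring_1 set"
  assumes "prime p" "CHAR('a) = p"
  shows "frob_bracket p m (frob_bracket p n a) = frob_bracket p (n + m) a"
proof
  let ?J = "frob_bracket p (n + m) a"
  have K: "frob_bracket p n a \<subseteq> {x. x ^ (p ^ m) \<in> ?J}"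
    unfolding frob_bracket_def[of p n]
  proof (rule ideal_gen_least)
    show "is_ideal {x. x ^ (p ^ m) \<in> ?J}"
      unfolding is_ideal_def
    proof (intro conjI ballI allI; clarsimp)
      have "p ^ m > 0" using assms by (simp add: prime_gt_0_nat)
      then show "(0::'a) ^ p ^ m \<in> ?J" using ideal_zero[OF bracket_ideal]
        by (simp add: zero_power)
      fix x y :: 'a assume "x ^ p ^ m \<in> ?J" "y ^ p ^ m \<in> ?J"
      moreover have "(x + y) ^ p ^ m = x ^ p ^ m + y ^ p ^ m"
        using freshmans_dream'[where n=m and x=x and y=y] assms by blast
      ultimately show "(x + y) ^ p ^ m \<in> ?J"
        using ideal_add[OF bracket_ideal] by metis
    next
      fix r x :: 'a assume "x ^ p ^ m \<in> ?J"
      then show "(r * x) ^ p ^ m \<in> ?J"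
        unfolding power_mult_distrib by (rule ideal_mult[OF bracket_ideal])
    qed
    show "(\<lambda>r. r ^ p ^ n) ` a \<subseteq> {x. x ^ p ^ m \<in> ?J}"
      using pow_in_bracket[of _ a p "n+m"] by (auto simp: power_add power_mult)
  qed
  show "frob_bracket p m (frob_bracket p n a) \<subseteq> ?J"
    unfolding frob_bracket_def[of p m]
    by (rule ideal_gen_least[OF bracket_ideal]) (use K in blast)
  show "?J \<subseteq> frob_bracket p m (frob_bracket p n a)"
    unfolding frob_bracket_def[of p "n+m"]
  proof (rule ideal_gen_least[OF bracket_ideal], clarify)
    fix x assume "x \<in> a"
    then have "x ^ p ^ n \<in> frob_bracket p n a" by (rule pow_in_bracket)
    then have "(x ^ p ^ n) ^ p ^ m \<in> frob_bracket p m (frob_bracket p n a)" by (rule pow_in_bracket)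
    then show "x ^ p ^ (n + m) \<in> frob_bracket p m (frob_bracket p n a)"
      by (simp add: power_add power_mult)
  qed
qed

lemma bracket_shift:
  fixes a :: "'a::comm_ring_1 set"
  assumes "prime p" "CHAR('a) = p" "r ^ (p ^ n) \<in> frob_bracket p n a"
  shows "r ^ (p ^ (n + k)) \<in> frob_bracket p (n + k) a"
proof -
  have "(r ^ (p ^ n)) ^ (p ^ k) \<in> frob_bracket p k (frob_bracket p n a)"
    using assms(3) by (rule pow_in_bracket)
  then show ?thesis using bracket_comp[OF assms(1,2)]
    by (simp add: power_add power_mult[symmetric])
qed

lemma frob_closure_ideal:
  fixes a :: "'a::comm_ring_1 set"
  assumes "prime p" "CHAR('a) = p"
  shows "is_ideal (frob_closure p a)"
  unfolding is_ideal_def frob_closure_def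
proof (intro conjI ballI allI; clarsimp)
  show "\<exists>n. (0::'a) ^ p ^ n \<in> frob_bracket p n a"
    using ideal_zero[OF bracket_ideal] by (intro exI[of _ 0]) simp
  fix x y :: 'a and n m
  assume x: "x ^ p ^ n \<in> frob_bracket p n a" and y: "y ^ p ^ m \<in> frob_bracket p m a"
  have "x ^ p ^ (n + m) \<in> frob_bracket p (n + m) a" using bracket_shift[OF assms x] .
  moreover have "y ^ p ^ (m + n) \<in> frob_bracket p (m + n) a" using bracket_shift[OF assms y] .
  ultimately have "(x + y) ^ p ^ (n + m) \<in> frob_bracket p (n + m) a"
    using freshmans_dream'[of "p ^ (n+m)" "n+m" x y] assms ideal_add[OF bracket_ideal]
    by (simp add: add.commute)
  then show "\<exists>n. (x + y) ^ p ^ n \<in> frob_bracket p n a" by blast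
next
  fix r x :: 'a and n assume "x ^ p ^ n \<in> frob_bracket p n a"
  then show "\<exists>n. (r * x) ^ p ^ n \<in> frob_bracket p n a"
    by (auto simp: power_mult_distrib intro: ideal_mult[OF bracket_ideal])
qed

lemma bracket_sub_closure:
  assumes "x \<in> frob_bracket p n a"
  shows "x \<in> frob_closure p (frob_bracket p n a)"
  unfolding frob_closure_def
proof (rule CollectI, rule exI[of _ 0])
  show "x ^ p ^ 0 \<in> frob_bracket p 0 (frob_bracket p n a)"
    using pow_in_bracket[OF assms, of p 0] by simp
qed

lemma one_R_circ: "(1::'a::comm_ring_1) \<in> R_circ"
  unfolding R_circ_def
proof (intro CollectI allI impI notI)
  fix P :: "'a set" assume mp: "minimal_prime P" and one: "1 \<in> P"
  then have pr: "prime_ideal P" by (simp add: minimal_prime_def)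
  then have id: "is_ideal P" by (simp add: prime_ideal_def)
  have "x \<in> P" for x using ideal_mult[OF id one, of x] by simp
  then have "P = UNIV" by auto
  then show False using pr by (simp add: prime_ideal_def)
qed

lemma R_circ_mult: "c \<in> R_circ \<Longrightarrow> d \<in> R_circ \<Longrightarrow> c * d \<in> R_circ"
  unfolding R_circ_def minimal_prime_def prime_ideal_def by auto

lemma R_circ_pow: "c \<in> R_circ \<Longrightarrow> c ^ n \<in> R_circ"
  by (induction n) (auto simp: one_R_circ R_circ_mult)

lemma closure_sub_tight:
  fixes a :: "'a::comm_ring_1 set"
  assumes "prime p" "CHAR('a) = p" "x \<in> frob_closure p a"
  shows "x \<in> tight_closure p a"
proof -
  obtain k where k: "x ^ p ^ k \<in> frob_bracket p k a" using assms(3) by (auto simp: frob_closure_def)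
  have "\<forall>n\<ge>k. 1 * x ^ (p ^ n) \<in> frob_bracket p n a"
  proof (intro allI impI)
    fix n assume "k \<le> n"
    then have "n = k + (n - k)" by simp
    then show "1 * x ^ (p ^ n) \<in> frob_bracket p n a"
      using bracket_shift[OF assms(1,2) k, of "n - k"] by simp
  qed
  then have "\<exists>n0. \<forall>n\<ge>n0. 1 * x ^ (p ^ n) \<in> frob_bracket p n a" by (rule exI)
  then show ?thesis unfolding tight_closure_def using one_R_circ by (intro CollectI bexI)
qed


lemma frob_act_single:
  fixes h :: "nat \<Rightarrow> 'a::comm_ring_1"
  shows "frob_act p (\<lambda>j. if j = i then c else 0) h (n + i) = c * h n ^ (p ^ i)"
  unfolding frob_act_def
  by (simp add: if_distrib[where f="\<lambda>x. x * _"] cong: if_cong)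

lemma single_cx_sum: "w \<le> i \<Longrightarrow> (\<lambda>j. if j = i then c else 0) \<in> cx_sum c w"
  unfolding cx_sum_def fin_supp_def
proof (intro CollectI conjI allI impI)
  show "\<exists>N. \<forall>n\<ge>N. (if n = i then c else 0) = 0"
    by (rule exI[of _ "Suc i"]) simp
next
  fix j assume "j < w" "w \<le> i"
  then show "(if j = i then c else 0) = 0" by simp
next
  fix j show "\<exists>r. (if j = i then c else 0) = r * c"
  proof (cases "j = i")
    case True then show ?thesis by (intro exI[of _ 1]) simp
  next
    case False then show ?thesis by (intro exI[of _ 0]) simp
  qed
qed

lemma test_bracket:
  fixes a :: "'a::comm_ring_1 set"
  assumes "prime p" "CHAR('a) = p" "weak_test_element p w0 c" "is_ideal b"
  shows "x \<in> tight_closure p b \<longleftrightarrow> (\<forall>n\<ge>w0. c * x ^ (p ^ n) \<in> frob_bracket p n b)"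
proof -
  have "\<forall>b r. is_ideal b \<longrightarrow>
        (r \<in> tight_closure p b \<longleftrightarrow> (\<forall>n\<ge>w0. c * r ^ (p ^ n) \<in> frob_bracket p n b))"
    using assms(3) unfolding weak_test_element_def by (rule conjunct2)
  from this[rule_format, OF assms(4)] show ?thesis .
qed

theorem proposition2p4:
  fixes p w0 :: nat and c :: "'a::comm_ring_1" and a :: "'a set"
  assumes "noetherian_ring TYPE('a)"
    and "prime p" and "CHAR('a) = p"
    and "weak_test_element p w0 c"
    and "is_ideal a"
  shows "graded_ann p (\<lambda>n. frob_bracket p n a) (cx_sum c w0)
           = {h. fin_supp h \<and> (\<forall>n. h n \<in> tight_closure p (frob_bracket p n a))}
         \<and> graded_ann p (\<lambda>n. frob_closure p (frob_bracket p n a)) (cx_sum c 0)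
           = {h. fin_supp h \<and> (\<forall>n. h n \<in> tight_closure p (frob_bracket p n a))}"
proof -
  note pc = assms(2,3)
  note T = test_bracket[OF pc assms(4) bracket_ideal]
  have cR: "c \<in> R_circ" using assms(4) unfolding weak_test_element_def by blast
  have comp: "\<And>m n. frob_bracket p m (frob_bracket p n a) = frob_bracket p (n + m) a"
    using bracket_comp[OF pc] .
  have i1: "h n \<in> tight_closure p (frob_bracket p n a)"
    if h: "h \<in> graded_ann p (\<lambda>n. frob_bracket p n a) (cx_sum c w0)" for h n
  proof -
    have "c * h n ^ (p ^ i) \<in> frob_bracket p i (frob_bracket p n a)" if "w0 \<le> i" for i
    proof -
      have "frob_act p (\<lambda>j. if j = i then c else 0) h (n + i) \<in> frob_bracket p (n + i) a"
        using h single_cx_sum[OF that, of c] unfolding graded_ann_def by blast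
      then show ?thesis by (simp add: frob_act_single comp)
    qed
    then show ?thesis using T by blast
  qed
  have i2: "h \<in> graded_ann p (\<lambda>n. frob_bracket p n a) (cx_sum c w0)"
    if h: "fin_supp h" "\<forall>n. h n \<in> tight_closure p (frob_bracket p n a)" for h
    unfolding graded_ann_def
  proof (intro CollectI conjI ballI allI)
    show "fin_supp h" by fact
    fix \<theta> k assume th: "\<theta> \<in> cx_sum c w0"
    show "frob_act p \<theta> h k \<in> frob_bracket p k a"
      unfolding frob_act_def
    proof (rule ideal_sum[OF bracket_ideal])
      fix i assume "i \<in> {..k}"
      then have ik: "i \<le> k" by simp
      show "\<theta> i * h (k - i) ^ p ^ i \<in> frob_bracket p k a"
      proof (cases "i < w0")
        case True then show ?thesis using th ideal_zero[OF bracket_ideal]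
          by (simp add: cx_sum_def)
      next
        case False
        obtain r where r: "\<theta> i = r * c" using th by (auto simp: cx_sum_def)
        have "c * h (k - i) ^ p ^ i \<in> frob_bracket p i (frob_bracket p (k - i) a)"
          using h(2) T False by auto
        then have "c * h (k - i) ^ p ^ i \<in> frob_bracket p k a" using ik by (simp add: comp)
        then have "r * (c * h (k - i) ^ p ^ i) \<in> frob_bracket p k a"
          by (rule ideal_mult[OF bracket_ideal])
        then show ?thesis by (simp add: r mult.assoc)
      qed
    qed
  qed
  have j1: "h n \<in> tight_closure p (frob_bracket p n a)"
    if h: "h \<in> graded_ann p (\<lambda>n. frob_closure p (frob_bracket p n a)) (cx_sum c 0)" for h n
  proof -
    have key: "c ^ (1 + p ^ w0) * h n ^ (p ^ (i + w0)) \<in> frob_bracket p (i + w0) (frob_bracket p n a)" for i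
    proof -
      have "frob_act p (\<lambda>j. if j = i then c else 0) h (n + i) \<in> frob_closure p (frob_bracket p (n + i) a)"
        using h single_cx_sum[of 0 i c] unfolding graded_ann_def by blast
      then have "c * h n ^ (p ^ i) \<in> frob_closure p (frob_bracket p (n + i) a)"
        by (simp add: frob_act_single)
      then have "c * h n ^ (p ^ i) \<in> tight_closure p (frob_bracket p (n + i) a)"
        by (rule closure_sub_tight[OF pc])
      then have "c * (c * h n ^ (p ^ i)) ^ (p ^ w0) \<in> frob_bracket p w0 (frob_bracket p (n + i) a)"
        using T by blast
      moreover have "c * (c * h n ^ (p ^ i)) ^ (p ^ w0) = c ^ (1 + p ^ w0) * h n ^ (p ^ (i + w0))"
        by (simp add: power_mult_distrib power_add power_mult[symmetric] mult.assoc)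
      ultimately show ?thesis by (simp add: comp add.assoc)
    qed
    have "\<forall>N\<ge>w0. c ^ (1 + p ^ w0) * h n ^ (p ^ N) \<in> frob_bracket p N (frob_bracket p n a)"
      using key by (metis le_add_diff_inverse2)
    moreover have "c ^ (1 + p ^ w0) \<in> R_circ" using cR by (rule R_circ_pow)
    ultimately show ?thesis unfolding tight_closure_def by blast
  qed
  have j2: "h \<in> graded_ann p (\<lambda>n. frob_closure p (frob_bracket p n a)) (cx_sum c 0)"
    if h: "fin_supp h" "\<forall>n. h n \<in> tight_closure p (frob_bracket p n a)" for h
    unfolding graded_ann_def
  proof (intro CollectI conjI ballI allI)
    show "fin_supp h" by fact
    fix \<theta> k assume th: "\<theta> \<in> cx_sum c 0"
    show "frob_act p \<theta> h k \<in> frob_closure p (frob_bracket p k a)"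
      unfolding frob_act_def
    proof (rule ideal_sum[OF frob_closure_ideal[OF pc]])
      fix i assume "i \<in> {..k}"
      then have ik: "i \<le> k" by simp
      obtain r where r: "\<theta> i = r * c" using th by (auto simp: cx_sum_def)
      define x where "x = h (k - i)"
      have "c * x ^ p ^ (i + w0) \<in> frob_bracket p (i + w0) (frob_bracket p (k - i) a)"
        using h(2) T unfolding x_def by auto
      then have A: "c * x ^ p ^ (i + w0) \<in> frob_bracket p w0 (frob_bracket p k a)"
        using ik by (simp add: comp add.assoc)
      have pw: "p ^ w0 = Suc (p ^ w0 - 1)" using pc by (simp add: prime_gt_0_nat)
      have "(c * x ^ p ^ i) ^ p ^ w0 = c ^ (p ^ w0 - 1) * (c * x ^ p ^ (i + w0))"
      proof -
        have "(c * x ^ p ^ i) ^ p ^ w0 = c ^ p ^ w0 * x ^ p ^ (i + w0)"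
          by (simp add: power_mult_distrib power_add power_mult[symmetric])
        also have "c ^ p ^ w0 = c ^ (p ^ w0 - 1) * c" by (subst pw) (simp add: mult.commute)
        finally show ?thesis by (simp add: mult.assoc)
      qed
      then have "(c * x ^ p ^ i) ^ p ^ w0 \<in> frob_bracket p w0 (frob_bracket p k a)"
        using ideal_mult[OF bracket_ideal A] by simp
      then have "c * x ^ p ^ i \<in> frob_closure p (frob_bracket p k a)"
        unfolding frob_closure_def by blast
      then have "r * (c * x ^ p ^ i) \<in> frob_closure p (frob_bracket p k a)"
        by (rule ideal_mult[OF frob_closure_ideal[OF pc]])
      then show "\<theta> i * h (k - i) ^ p ^ i \<in> frob_closure p (frob_bracket p k a)"
        by (simp add: r x_def mult.assoc)
    qed
  qed
  show ?thesis
  proof (intro conjI set_eqI iffI)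
    fix h assume "h \<in> graded_ann p (\<lambda>n. frob_bracket p n a) (cx_sum c w0)"
    then show "h \<in> {h. fin_supp h \<and> (\<forall>n. h n \<in> tight_closure p (frob_bracket p n a))}"
      using i1 by (auto simp: graded_ann_def)
  next
    fix h assume "h \<in> {h. fin_supp h \<and> (\<forall>n. h n \<in> tight_closure p (frob_bracket p n a))}"
    then show "h \<in> graded_ann p (\<lambda>n. frob_bracket p n a) (cx_sum c w0)" using i2 by blast
  next
    fix h assume "h \<in> graded_ann p (\<lambda>n. frob_closure p (frob_bracket p n a)) (cx_sum c 0)"
    then show "h \<in> {h. fin_supp h \<and> (\<forall>n. h n \<in> tight_closure p (frob_bracket p n a))}"
      using j1 by (auto simp: graded_ann_def)
  next
    fix h assume "h \<in> {h. fin_supp h \<and> (\<forall>n. h n \<in> tight_closure p (frob_bracket p n a))}"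
    then show "h \<in> graded_ann p (\<lambda>n. frob_closure p (frob_bracket p n a)) (cx_sum c 0)" using j2 by blast
  qed
qed

end
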